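(* The set $\mathcal M$ of universal distance matrices is nonempty. Moreover, $\mathcal M$ is an everywhere dense $G_\delta$-subset of the cone $\mathcal R$ with respect to the weak topology.
   Context: Let $\mathcal R$ be the set of all infinite real matrices $r=\{r_{i,j}\}_{i,j=1}^\infty$ with $r_{i,i}=0$, $r_{i,j}\ge 0$, $r_{i,j}=r_{j,i}$ and $r_{i,k}+r_{k,j}\ge r_{i,j}$ for all $i,j,k\in\mathbb N$ ("distance matrices"); it carries the weak topology, i.e. the topology of entrywise convergence (product topology on $\mathbb R^{\mathbb N\times\mathbb N}$). A distance matrix is proper if $r_{i,j}>0$ for all $i\ne j$. For $n\in\mathbb N$, $\mathcal R_n$ denotes the analogous set of $n\times n$ distance matrices and $p_n(r)$ denotes the upper-left (NW) $n\times n$ corner of $r$. For $q\in\mathcal R_n$, the set of admissible vectors is $A(q)=\{a\in\mathbb R^n: |a_i-a_j|\le q_{i,j}\le a_i+a_j \text{ for all } i,j=1,\dots,n\}$, i.e. the vectors $a$ such that bordering $q$ by $a$ as an extra last row and column gives a distance matrix of order $n+1$. A proper distance matrix $r\in\mathcal R$ is universal if for every $n\in\mathbb N$, every $a\in A(p_n(r))$ and every $\epsilon>0$ there exists $m\in\mathbb N$ (necessarily $m>n$ can be taken) with $\max_{1\le i\le n}|r_{i,m}-a_i|<\epsilon$; equivalently, for each $n$ the set of vectors $\{(r_{1,j},\dots,r_{n,j})\}_{j>n}$ is dense in $A(p_n(r))$. $\mathcal M$ denotes the set of universal distance matrices. *)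

theory Defs
  imports "HOL-Analysis.Analysis"
begin

text \<open>Infinite real matrices are functions nat => nat => real, indices starting at 0
(index i here corresponds to index i+1 in the paper). The type carries the
product topology (topology of entrywise convergence), instantiated in HOL-Analysis.\<close>

definition dist_matrix :: "(nat \<Rightarrow> nat \<Rightarrow> real) \<Rightarrow> bool" where
  "dist_matrix r \<longleftrightarrow>
     (\<forall>i. r i i = 0) \<and> (\<forall>i j. r i j \<ge> 0) \<and> (\<forall>i j. r i j = r j i) \<and>
     (\<forall>i j k. r i k + r k j \<ge> r i j)"

definition distR :: "(nat \<Rightarrow> nat \<Rightarrow> real) set" where
  "distR = {r. dist_matrix r}"

definition proper_dm :: "(nat \<Rightarrow> nat \<Rightarrow> real) \<Rightarrow> bool" where
  "proper_dm r \<longleftrightarrow> dist_matrix r \<and> (\<forall>i j. i \<noteq> j \<longrightarrow> r i j > 0)"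

text \<open>Vectors in R^n are represented as nat => real restricted to indices < n.\<close>
definition admissible :: "nat \<Rightarrow> (nat \<Rightarrow> nat \<Rightarrow> real) \<Rightarrow> (nat \<Rightarrow> real) \<Rightarrow> bool" where
  "admissible n q a \<longleftrightarrow>
     (\<forall>i<n. \<forall>j<n. \<bar>a i - a j\<bar> \<le> q i j \<and> q i j \<le> a i + a j)"

definition universal :: "(nat \<Rightarrow> nat \<Rightarrow> real) \<Rightarrow> bool" where
  "universal r \<longleftrightarrow> proper_dm r \<and>
     (\<forall>n a. admissible n r a \<longrightarrow>
        (\<forall>\<epsilon>>0. \<exists>m. \<forall>i<n. \<bar>r i m - a i\<bar> < \<epsilon>))"

definition universalM :: "(nat \<Rightarrow> nat \<Rightarrow> real) set" where
  "universalM = {r. universal r}"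

end

theory Submission
  imports Defs
begin

definition fdm :: "nat \<Rightarrow> (nat\<Rightarrow>nat\<Rightarrow>real) \<Rightarrow> bool" where
 "fdm n r \<longleftrightarrow> (\<forall>i<n. r i i = 0) \<and> (\<forall>i<n. \<forall>j<n. i\<noteq>j \<longrightarrow> r i j > 0) \<and>
   (\<forall>i<n. \<forall>j<n. r i j = r j i) \<and> (\<forall>i<n. \<forall>j<n. \<forall>k<n. r i k + r k j \<ge> r i j)"

lemma fdm_nonneg: "fdm n r \<Longrightarrow> i<n \<Longrightarrow> j<n \<Longrightarrow> r i j \<ge> 0"
  unfolding fdm_def by (metis order_less_imp_le order_refl)

definition ext :: "(nat\<Rightarrow>nat\<Rightarrow>real) \<Rightarrow> nat \<Rightarrow> (nat\<Rightarrow>real) \<Rightarrow> nat\<Rightarrow>nat\<Rightarrow>real" where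
 "ext r m e = (\<lambda>x y. if x = m \<and> y = m then 0 else if x = m then e y else if y = m then e x else r x y)"

lemma ext_fdm:
  assumes f: "fdm m r" and ad: "admissible m r e" and pos: "\<forall>x<m. e x > 0"
  shows "fdm (Suc m) (ext r m e)"
proof -
  have nn: "\<And>i j. i<m \<Longrightarrow> j<m \<Longrightarrow> r i j \<ge> 0" using fdm_nonneg[OF f] by blast
  have A: "\<And>i j. i<m \<Longrightarrow> j<m \<Longrightarrow> e i \<le> e j + r i j \<and> e j \<le> e i + r i j \<and> r i j \<le> e i + e j"
    using ad unfolding admissible_def abs_le_iff by force
  have T: "ext r m e i k + ext r m e k j \<ge> ext r m e i j" if "i < Suc m" "j < Suc m" "k < Suc m" for i j k
  proof -
    have i: "i < m \<or> i = m" and j: "j < m \<or> j = m" and k: "k < m \<or> k = m" using that by auto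
    have tri: "\<And>i j k. i<m \<Longrightarrow> j<m \<Longrightarrow> k<m \<Longrightarrow> r i k + r k j \<ge> r i j" and sy: "\<And>i j. i<m \<Longrightarrow> j<m \<Longrightarrow> r i j = r j i"
      using f unfolding fdm_def by blast+
    have ep: "\<And>x. x<m \<Longrightarrow> e x \<ge> 0" using pos by (simp add: less_imp_le)
    from i show ?thesis
    proof
      assume "i < m"
      from j show ?thesis
      proof
        assume "j < m"
        from k show ?thesis
        proof
          assume "k < m" then show ?thesis using tri[of i j k] `i<m` `j<m` by (simp add: ext_def)
        next
          assume "k = m" then show ?thesis using A[of i j] `i<m` `j<m` by (simp add: ext_def)
        qed
      next
        assume "j = m"
        from k show ?thesis
        proof
          assume "k < m" then show ?thesis using A[of i k] `i<m` `j=m` by (simp add: ext_def)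
        next
          assume "k = m" then show ?thesis using `i<m` `j=m` by (simp add: ext_def)
        qed
      qed
    next
      assume "i = m"
      from j show ?thesis
      proof
        assume "j < m"
        from k show ?thesis
        proof
          assume "k < m" then show ?thesis using A[of k j] sy[of k j] `i=m` `j<m` by (auto simp: ext_def)
        next
          assume "k = m" then show ?thesis using `i=m` `j<m` by (simp add: ext_def)
        qed
      next
        assume "j = m"
        from k show ?thesis
        proof
          assume "k < m" then show ?thesis using ep[of k] `i=m` `j=m` by (simp add: ext_def)
        next
          assume "k = m" then show ?thesis using `i=m` `j=m` by (simp add: ext_def)
        qed
      qed
    qed
  qed
  show ?thesis unfolding fdm_def
  proof (intro conjI allI impI)
    fix i j k assume "i < Suc m" "j < Suc m" "k < Suc m" then show "ext r m e i k + ext r m e k j \<ge> ext r m e i j" using T by blast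
  next
    fix i assume "i < Suc m" then show "ext r m e i i = 0" using f unfolding ext_def fdm_def by auto
  next
    fix i j assume "i < Suc m" "j < Suc m" "i \<noteq> j" then show "ext r m e i j > 0" using f pos unfolding ext_def fdm_def by (auto simp: less_Suc_eq)
  next
    fix i j assume "i < Suc m" "j < Suc m" then show "ext r m e i j = ext r m e j i" using f unfolding ext_def fdm_def by (auto simp: less_Suc_eq)
  qed
qed

definition kat :: "(nat\<Rightarrow>nat\<Rightarrow>real) \<Rightarrow> nat \<Rightarrow> (nat\<Rightarrow>real) \<Rightarrow> nat \<Rightarrow> real" where
  "kat r n a = (\<lambda>x. Min ((\<lambda>i. a i + r x i) ` {..<n}))"

lemma kat_props:
  assumes f: "fdm m r" and n1: "1 \<le> n" and nm: "n \<le> m" and ad: "admissible n r a" and pos: "\<forall>i<n. a i > 0"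
  shows "admissible m r (kat r n a) \<and> (\<forall>x<m. kat r n a x > 0) \<and> (\<forall>x<n. kat r n a x = a x)"
proof -
  have fin: "finite ((\<lambda>i. a i + r x i) ` {..<n})" for x by simp
  have ne: "((\<lambda>i. a i + r x i) ` {..<n}) \<noteq> {}" for x using n1 by (auto simp: lessThan_empty_iff)
  have le: "kat r n a x \<le> a i + r x i" if "i < n" for x i
    unfolding kat_def using that fin by (intro Min_le) auto
  have ex: "\<exists>l<n. kat r n a x = a l + r x l" for x
    using Min_in[OF fin ne, of x] unfolding kat_def by auto
  have tri: "\<And>i j k. i<m \<Longrightarrow> j<m \<Longrightarrow> k<m \<Longrightarrow> r i k + r k j \<ge> r i j" and sy: "\<And>i j. i<m \<Longrightarrow> j<m \<Longrightarrow> r i j = r j i"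
    and dg: "\<And>i. i<m \<Longrightarrow> r i i = 0"
    using f unfolding fdm_def by blast+
  have nn: "\<And>i j. i<m \<Longrightarrow> j<m \<Longrightarrow> r i j \<ge> 0" using fdm_nonneg[OF f] by blast
  have A: "\<And>i j. i<n \<Longrightarrow> j<n \<Longrightarrow> a i \<le> a j + r i j \<and> a j \<le> a i + r i j \<and> r i j \<le> a i + a j"
    using ad unfolding admissible_def abs_le_iff by force
  have lip: "kat r n a x \<le> kat r n a y + r x y" if "x < m" "y < m" for x y
  proof -
    obtain l where l: "l < n" "kat r n a y = a l + r y l" using ex by blast
    have "kat r n a x \<le> a l + r x l" using le l by blast
    also have "r x l \<le> r x y + r y l" using tri[of x l y] that l nm by simp
    finally show ?thesis using l by simp
  qed
  have sum: "r x y \<le> kat r n a x + kat r n a y" if "x < m" "y < m" for x y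
  proof -
    obtain l where l: "l < n" "kat r n a x = a l + r x l" using ex by blast
    obtain l' where l': "l' < n" "kat r n a y = a l' + r y l'" using ex by blast
    have "r x y \<le> r x l + r l y" using tri[of x y l] that l nm by simp
    moreover have "r l y \<le> r l l' + r l' y" using tri[of l y l'] that l l' nm by simp
    moreover have "r l l' \<le> a l + a l'" using A l l' by blast
    moreover have "r l' y = r y l'" using sy l' that nm by simp
    ultimately show ?thesis using l l' by simp
  qed
  have p: "kat r n a x > 0" if "x < m" for x
  proof -
    obtain l where l: "l < n" "kat r n a x = a l + r x l" using ex by blast
    have "a l > 0" using pos l by blast
    then show ?thesis using l nn[of x l] that nm by simp
  qed
  have v: "kat r n a x = a x" if "x < n" for x
  proof -
    have "kat r n a x \<le> a x" using le[of x x] that dg[of x] nm by simp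
    moreover obtain l where l: "l < n" "kat r n a x = a l + r x l" using ex by blast
    moreover have "a x \<le> a l + r x l" using A[of x l] l that by simp
    ultimately show ?thesis by simp
  qed
  have "admissible m r (kat r n a)" unfolding admissible_def
  proof (intro allI impI conjI)
    fix i j assume "i < m" "j < m"
    then show "\<bar>kat r n a i - kat r n a j\<bar> \<le> r i j" using lip[of i j] lip[of j i] sy[of i j] by (simp add: abs_le_iff)
    show "r i j \<le> kat r n a i + kat r n a j" using sum `i<m` `j<m` by blast
  qed
  then show ?thesis using p v by blast
qed

definition vec :: "rat list \<Rightarrow> nat \<Rightarrow> real" where "vec bs i = of_rat (bs ! i)"

lemma finite_pos_lb:
  assumes "finite (S::real set)" "\<forall>x\<in>S. x > 0"
  shows "\<exists>d>0. \<forall>x\<in>S. d \<le> x"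
proof -
  have "Min (insert 1 S) > 0" using assms by (subst Min_gr_iff) auto
  moreover have "\<forall>x\<in>S. Min (insert 1 S) \<le> x" using assms by auto
  ultimately show ?thesis by blast
qed

lemma rat_approx:
  assumes f: "fdm n q" and ad: "admissible n q a" and e: "\<epsilon> > 0"
  shows "\<exists>bs. length bs = n \<and> admissible n q (vec bs) \<and> (\<forall>i<n. \<bar>vec bs i - a i\<bar> < \<epsilon>)"
proof -
  have nn: "\<And>i j. i<n \<Longrightarrow> j<n \<Longrightarrow> q i j \<ge> 0" using fdm_nonneg[OF f] by blast
  have dg: "\<And>i. i<n \<Longrightarrow> q i i = 0" and ps: "\<And>i j. i<n \<Longrightarrow> j<n \<Longrightarrow> i \<noteq> j \<Longrightarrow> q i j > 0"
    using f unfolding fdm_def by blast+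
  have A: "\<And>i j. i<n \<Longrightarrow> j<n \<Longrightarrow> \<bar>a i - a j\<bar> \<le> q i j \<and> q i j \<le> a i + a j"
    using ad unfolding admissible_def by blast
  define Q where "Q = (\<Sum>i<n. \<Sum>j<n. q i j)"
  have qle: "q i j \<le> Q" if "i<n" "j<n" for i j
  proof -
    have "q i j \<le> (\<Sum>j<n. q i j)" using that nn by (intro member_le_sum) auto
    also have "\<dots> \<le> Q" unfolding Q_def using that nn by (intro member_le_sum) (auto intro: sum_nonneg)
    finally show ?thesis .
  qed
  define M where "M = Q + 1"
  define AA where "AA = (\<Sum>i<n. \<bar>a i\<bar>)"
  have ale: "\<bar>a i\<bar> \<le> AA" if "i < n" for i unfolding AA_def using that by (intro member_le_sum) auto
  have AA0: "AA \<ge> 0" unfolding AA_def by (auto intro: sum_nonneg)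
  have Q0: "Q \<ge> 0" unfolding Q_def using nn by (auto intro!: sum_nonneg)
  obtain \<delta> where d: "\<delta> > 0" "\<And>i j. i<n \<Longrightarrow> j<n \<Longrightarrow> i \<noteq> j \<Longrightarrow> \<delta> \<le> q i j"
  proof -
    have "finite {q i j |i j. i<n \<and> j<n \<and> i \<noteq> j}"
      by (rule finite_subset[of _ "(\<lambda>(i,j). q i j) ` ({..<n} \<times> {..<n})"]) auto
    moreover have "\<forall>x\<in>{q i j |i j. i<n \<and> j<n \<and> i \<noteq> j}. x > 0" using ps by auto
    ultimately obtain d where d0: "d > 0" and dS: "\<forall>x\<in>{q i j |i j. i<n \<and> j<n \<and> i \<noteq> j}. d \<le> x"
      using finite_pos_lb[of "{q i j |i j. i<n \<and> j<n \<and> i \<noteq> j}"] by auto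
    have "\<And>i j. i<n \<Longrightarrow> j<n \<Longrightarrow> i \<noteq> j \<Longrightarrow> d \<le> q i j"
    proof -
      fix i j assume "i<n" "j<n" "i \<noteq> j"
      then have "q i j \<in> {q i j |i j. i<n \<and> j<n \<and> i \<noteq> j}" by blast
      then show "d \<le> q i j" using dS by blast
    qed
    then show ?thesis using that d0 by blast
  qed
  define t where "t = min 1 (\<epsilon> / (2*(M + AA + 1)))"
  have MA: "M + AA + 1 > 0" using AA0 Q0 unfolding M_def by simp
  have t0: "t > 0" "t \<le> 1" unfolding t_def using e MA by auto
  have tb: "t * (M + AA + 1) \<le> \<epsilon>/2"
  proof -
    have "t \<le> \<epsilon> / (2*(M + AA + 1))" unfolding t_def by simp
    then have "t * (M + AA + 1) \<le> \<epsilon> / (2*(M + AA + 1)) * (M + AA + 1)" using MA by (intro mult_right_mono) auto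
    also have "\<dots> = \<epsilon>/2" using MA by (simp add: field_simps)
    finally show ?thesis .
  qed
  define x where "x i = (1-t) * a i + t * M" for i
  define \<rho> where "\<rho> = t * min \<delta> 1 / 3"
  have r0: "\<rho> > 0" unfolding \<rho>_def using t0 d by simp
  have r1: "\<rho> \<le> t/3" unfolding \<rho>_def using t0 by (simp add: mult_left_le)
  have r2: "2*\<rho> \<le> t * q i j" if "i<n" "j<n" "i\<noteq>j" for i j
  proof -
    have "min \<delta> 1 \<le> q i j" using d that by (meson min.coboundedI1)
    then have "t * min \<delta> 1 \<le> t * q i j" using t0 by (intro mult_left_mono) auto
    moreover have "t * min \<delta> 1 \<ge> 0" using t0 d by simp
    ultimately show ?thesis unfolding \<rho>_def by linarith
  qed
  have "\<forall>i. \<exists>c::rat. \<bar>of_rat c - x i\<bar> < \<rho>"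
  proof
    fix i
    obtain c where "c \<in> \<rat>" "x i - \<rho> < c" "c < x i + \<rho>" using Rats_dense_in_real[of "x i - \<rho>" "x i + \<rho>"] r0 by auto
    then obtain c' where "x i - \<rho> < of_rat c'" "of_rat c' < x i + \<rho>" by (auto elim!: Rats_cases)
    then have "\<bar>of_rat c' - x i\<bar> < \<rho>" by (simp add: abs_less_iff)
    then show "\<exists>c::rat. \<bar>of_rat c - x i\<bar> < \<rho>" by blast
  qed
  then obtain g where g: "\<And>i. \<bar>of_rat (g i) - x i\<bar> < \<rho>" by metis
  define bs where "bs = map g [0..<n]"
  have vb: "vec bs i = of_rat (g i)" if "i < n" for i unfolding vec_def bs_def using that by simp
  have xd: "\<bar>x i - x j\<bar> \<le> (1-t) * q i j" if "i<n" "j<n" for i j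
  proof -
    have "x i - x j = (1-t) * (a i - a j)" unfolding x_def by (simp add: algebra_simps)
    then have "\<bar>x i - x j\<bar> = (1-t) * \<bar>a i - a j\<bar>" using t0 by (simp add: abs_mult)
    also have "\<dots> \<le> (1-t) * q i j" using A[OF that] t0 by (intro mult_left_mono) auto
    finally show ?thesis .
  qed
  have xs: "x i + x j \<ge> q i j + 2*t" if "i<n" "j<n" for i j
  proof -
    have "x i + x j = (1-t) * (a i + a j) + 2*t*M" unfolding x_def by (simp add: algebra_simps)
    moreover have "(1-t) * (a i + a j) \<ge> (1-t) * q i j" using A[OF that] t0 by (intro mult_left_mono) auto
    moreover have "t * (2*M - q i j) \<ge> t * 2" using qle[OF that] Q0 t0 unfolding M_def by (intro mult_left_mono) auto
    ultimately show ?thesis by (simp add: algebra_simps)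
  qed
  have xa: "\<bar>x i - a i\<bar> \<le> t * (M + AA)" if "i<n" for i
  proof -
    have "x i - a i = t * (M - a i)" unfolding x_def by (simp add: algebra_simps)
    then have "\<bar>x i - a i\<bar> = t * \<bar>M - a i\<bar>" using t0 by (simp add: abs_mult)
    also have "\<dots> \<le> t * (M + AA)" using ale[OF that] Q0 t0 unfolding M_def by (intro mult_left_mono) auto
    finally show ?thesis .
  qed
  have "admissible n q (vec bs)" unfolding admissible_def
  proof (intro allI impI conjI)
    fix i j assume ij: "i<n" "j<n"
    show "\<bar>vec bs i - vec bs j\<bar> \<le> q i j"
    proof (cases "i = j")
      case True then show ?thesis using nn ij by simp
    next
      case False
      have "\<bar>vec bs i - vec bs j\<bar> \<le> \<bar>x i - x j\<bar> + 2*\<rho>" using g[of i] g[of j] vb[OF ij(1)] vb[OF ij(2)] by (smt (verit))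
      also have "\<dots> \<le> (1-t) * q i j + t * q i j" using xd[OF ij] r2[OF ij False] by simp
      finally show ?thesis by (simp add: algebra_simps)
    qed
    show "q i j \<le> vec bs i + vec bs j" using xs[OF ij] g[of i] g[of j] vb ij r1 by (simp add: abs_less_iff)
  qed
  moreover have "\<bar>vec bs i - a i\<bar> < \<epsilon>" if "i < n" for i
  proof -
    have "\<bar>vec bs i - a i\<bar> < \<rho> + t * (M + AA)" using g[of i] xa[OF that] vb[OF that] by (simp add: abs_le_iff abs_less_iff)
    also have "\<dots> \<le> t * (M + AA + 1)" using r1 t0 by (simp add: algebra_simps)
    also have "\<dots> < \<epsilon>" using tb e by simp
    finally show ?thesis .
  qed
  moreover have "length bs = n" unfolding bs_def by simp
  ultimately show ?thesis by blast
qed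

lemma shift_adm:
  assumes f: "fdm m r" and nm: "n \<le> m" and ad: "admissible n r b" and s: "s > 0"
  shows "admissible n r (\<lambda>i. b i + s) \<and> (\<forall>i<n. b i + s > 0)"
proof -
  have "b i \<ge> 0" if "i < n" for i
  proof -
    have "r i i \<le> b i + b i" using ad that unfolding admissible_def by blast
    moreover have "r i i = 0" using f that nm unfolding fdm_def by auto
    ultimately show ?thesis by simp
  qed
  note b0 = this
  have "admissible n r (\<lambda>i. b i + s)" unfolding admissible_def
  proof (intro allI impI conjI)
    fix i j assume "i < n" "j < n"
    then have "\<bar>b i - b j\<bar> \<le> r i j \<and> r i j \<le> b i + b j" using ad unfolding admissible_def by blast
    then show "\<bar>b i + s - (b j + s)\<bar> \<le> r i j" "r i j \<le> b i + s + (b j + s)" using s by auto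
  qed
  moreover have "\<forall>i<n. b i + s > 0" using b0 s by (simp add: add_nonneg_pos)
  ultimately show ?thesis by blast
qed

definition task :: "nat \<Rightarrow> rat list \<times> nat" where "task j = from_nat (fst (prod_decode j))"
definition sh :: "nat \<Rightarrow> real" where "sh k = inverse (real (Suc k)) / 2"
definition stepv :: "(nat\<Rightarrow>nat\<Rightarrow>real) \<Rightarrow> nat \<Rightarrow> rat list \<times> nat \<Rightarrow> nat \<Rightarrow> real" where
  "stepv r m t = (if 1 \<le> length (fst t) \<and> length (fst t) \<le> m \<and> admissible (length (fst t)) r (vec (fst t))
     then kat r (length (fst t)) (\<lambda>i. vec (fst t) i + sh (snd t)) else kat r 1 (\<lambda>_. 1))"

lemma sh_pos: "sh k > 0" unfolding sh_def by simp

lemma stepv_ok: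
  assumes f: "fdm m r" and m1: "1 \<le> m"
  shows "admissible m r (stepv r m t) \<and> (\<forall>x<m. stepv r m t x > 0)"
proof (cases "1 \<le> length (fst t) \<and> length (fst t) \<le> m \<and> admissible (length (fst t)) r (vec (fst t))")
  case True
  then have "admissible (length (fst t)) r (\<lambda>i. vec (fst t) i + sh (snd t)) \<and> (\<forall>i<length (fst t). vec (fst t) i + sh (snd t) > 0)"
    using shift_adm[OF f, of "length (fst t)" "vec (fst t)" "sh (snd t)"] sh_pos by blast
  then show ?thesis using kat_props[OF f, of "length (fst t)"] True unfolding stepv_def if_P[OF True] by simp
next
  case False
  have "r 0 0 = 0" using f m1 unfolding fdm_def by auto
  then have "admissible 1 r (\<lambda>_. 1)" unfolding admissible_def by simp
  then show ?thesis using kat_props[OF f, of 1 "\<lambda>_. 1"] False m1 unfolding stepv_def if_not_P[OF False] by simp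
qed

lemma stepv_val:
  assumes f: "fdm m r" and "1 \<le> length bs" "length bs \<le> m" "admissible (length bs) r (vec bs)" "x < length bs"
  shows "stepv r m (bs,k) x = vec bs x + sh k"
proof -
  have "admissible (length bs) r (\<lambda>i. vec bs i + sh k) \<and> (\<forall>i<length bs. vec bs i + sh k > 0)"
    using shift_adm[OF f, of "length bs" "vec bs" "sh k"] sh_pos assms by blast
  then show ?thesis using kat_props[OF f, of "length bs" "\<lambda>i. vec bs i + sh k"] assms unfolding stepv_def by simp
qed

primrec seqR :: "nat \<Rightarrow> (nat\<Rightarrow>nat\<Rightarrow>real) \<Rightarrow> nat \<Rightarrow> nat\<Rightarrow>nat\<Rightarrow>real" where
  "seqR N q 0 = q"
| "seqR N q (Suc j) = ext (seqR N q j) (N+j) (stepv (seqR N q j) (N+j) (task j))"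

definition limR :: "nat \<Rightarrow> (nat\<Rightarrow>nat\<Rightarrow>real) \<Rightarrow> nat\<Rightarrow>nat\<Rightarrow>real" where
  "limR N q = (\<lambda>x y. seqR N q (Suc (max x y)) x y)"

lemma seqR_fdm: assumes "fdm N q" "1 \<le> N" shows "fdm (N+j) (seqR N q j)"
proof (induction j)
  case 0 then show ?case using assms by simp
next
  case (Suc j)
  have "fdm (Suc (N+j)) (seqR N q (Suc j))"
    using ext_fdm[OF Suc.IH] stepv_ok[OF Suc.IH] assms by simp
  then show ?case by simp
qed

lemma seqR_step: "x < N+j \<Longrightarrow> y < N+j \<Longrightarrow> seqR N q (Suc j) x y = seqR N q j x y"
  by (simp add: ext_def)

lemma seqR_stable: "j \<le> k \<Longrightarrow> x < N+j \<Longrightarrow> y < N+j \<Longrightarrow> seqR N q k x y = seqR N q j x y"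
proof (induction k)
  case 0 then show ?case by simp
next
  case (Suc k)
  show ?case
  proof (cases "j = Suc k")
    case True then show ?thesis by simp
  next
    case False
    then have "j \<le> k" using Suc.prems by simp
    then show ?thesis using Suc seqR_step[of x N k y q] by simp
  qed
qed

lemma limR_eq: assumes "x < N+j" "y < N+j" shows "limR N q x y = seqR N q j x y"
proof -
  let ?J = "Suc (max x y)"
  have "seqR N q (max j ?J) x y = seqR N q j x y" using seqR_stable assms by simp
  moreover have "seqR N q (max j ?J) x y = seqR N q ?J x y" using seqR_stable[of ?J "max j ?J" x N y q] by simp
  ultimately show ?thesis unfolding limR_def by simp
qed

lemma limR_fdm: assumes "fdm N q" "1 \<le> N" shows "fdm n (limR N q)"
proof -
  have "fdm (N+n) (seqR N q n)" using seqR_fdm assms by blast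
  then show ?thesis unfolding fdm_def using limR_eq[of _ N n _ q] by auto
qed

lemma limR_proper: assumes "fdm N q" "1 \<le> N" shows "proper_dm (limR N q)"
proof -
  have F: "\<And>n. fdm n (limR N q)" using limR_fdm assms by blast
  show ?thesis unfolding proper_dm_def dist_matrix_def
  proof (intro conjI allI impI)
    fix i show "limR N q i i = 0" using F[of "Suc i"] unfolding fdm_def by simp
  next
    fix i j show "limR N q i j \<ge> 0" using fdm_nonneg[OF F[of "Suc (max i j)"]] by simp
  next
    fix i j show "limR N q i j = limR N q j i" using F[of "Suc (max i j)"] unfolding fdm_def by simp
  next
    fix i j k
    have "i < Suc (max i (max j k))" "j < Suc (max i (max j k))" "k < Suc (max i (max j k))" by auto
    then show "limR N q i k + limR N q k j \<ge> limR N q i j" using F[of "Suc (max i (max j k))"] unfolding fdm_def by blast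
  next
    fix i j :: nat assume "i \<noteq> j" then show "limR N q i j > 0" using F[of "Suc (max i j)"] unfolding fdm_def by simp
  qed
qed

lemma limR_agree: "x < N \<Longrightarrow> y < N \<Longrightarrow> limR N q x y = q x y"
  using limR_eq[of x N 0 y q] by simp

lemma proper_fdm: "proper_dm r \<Longrightarrow> fdm n r"
  unfolding proper_dm_def dist_matrix_def fdm_def by blast

lemma univ_from_rat:
  assumes p: "proper_dm r"
  and R: "\<And>bs k. admissible (length bs) r (vec bs) \<Longrightarrow> \<exists>m. \<forall>i<length bs. \<bar>r i m - vec bs i\<bar> < inverse (real (Suc k))"
  shows "universal r"
  unfolding universal_def
proof (intro conjI allI impI p)
  fix n a and \<epsilon>::real assume ad: "admissible n r a" and e: "\<epsilon> > 0"
  obtain bs where bs: "length bs = n" "admissible n r (vec bs)" "\<forall>i<n. \<bar>vec bs i - a i\<bar> < \<epsilon>/2"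
    using rat_approx[OF proper_fdm[OF p] ad, of "\<epsilon>/2"] e by auto
  obtain k where k: "inverse (real (Suc k)) < \<epsilon>/2" using reals_Archimedean[of "\<epsilon>/2"] e by auto
  obtain m where m: "\<forall>i<n. \<bar>r i m - vec bs i\<bar> < inverse (real (Suc k))" using R[of bs k] bs by auto
  have "\<bar>r i m - a i\<bar> < \<epsilon>" if "i < n" for i
    using m[rule_format, OF that] bs(3)[rule_format, OF that] k unfolding abs_less_iff by linarith
  then show "\<exists>m. \<forall>i<n. \<bar>r i m - a i\<bar> < \<epsilon>" by blast
qed

lemma limR_universal: assumes f: "fdm N q" and N1: "1 \<le> N" shows "universal (limR N q)"
proof (rule univ_from_rat[OF limR_proper[OF f N1]])
  fix bs k assume ad: "admissible (length bs) (limR N q) (vec bs)"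
  let ?n = "length bs"
  show "\<exists>m. \<forall>i<?n. \<bar>limR N q i m - vec bs i\<bar> < inverse (real (Suc k))"
  proof (cases "?n = 0")
    case True then show ?thesis by simp
  next
    case False
    define j where "j = prod_encode (to_nat (bs,k), ?n)"
    have tj: "task j = (bs,k)" unfolding task_def j_def by simp
    have jn: "?n \<le> j" unfolding j_def by (rule le_prod_encode_2)
    have F: "fdm (N+j) (seqR N q j)" using seqR_fdm[OF f N1] by blast
    have adj: "admissible ?n (seqR N q j) (vec bs)"
      using ad limR_eq[of _ N j _ q] jn unfolding admissible_def by auto
    have "\<bar>limR N q i (N+j) - vec bs i\<bar> < inverse (real (Suc k))" if i: "i < ?n" for i
    proof -
      have "limR N q i (N+j) = seqR N q (Suc j) i (N+j)" using limR_eq[of i N "Suc j" "N+j" q] i jn by simp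
      also have "\<dots> = stepv (seqR N q j) (N+j) (bs,k) i" using i jn tj by (simp add: ext_def)
      also have "\<dots> = vec bs i + sh k" using stepv_val[OF F, of bs i k] False jn adj i by simp
      finally show ?thesis unfolding sh_def by simp
    qed
    then show ?thesis by blast
  qed
qed

lemma tf: "((f::'a \<Rightarrow> 'b \<Rightarrow> 'c::topological_space) \<longlongrightarrow> l) F \<longleftrightarrow> (\<forall>i. ((\<lambda>c. f c i) \<longlongrightarrow> l i) F)"
  using limitin_componentwise[of "\<lambda>i. euclidean" UNIV f l F]
  by (simp add: euclidean_product_topology)

lemma coord_cont: "continuous_on UNIV (\<lambda>r::nat\<Rightarrow>nat\<Rightarrow>real. r i j)"
  by (rule continuous_on_product_then_coordinatewise[OF continuous_on_product_coordinates])

lemma dense_part: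
  assumes r0: "r0 \<in> distR" shows "r0 \<in> closure universalM"
proof -
  have dm: "dist_matrix r0" using r0 unfolding distR_def by simp
  define qk where "qk k = (\<lambda>x y. r0 x y + (if x = y then 0 else inverse (real (Suc k))))" for k
  have fq: "fdm (Suc k) (qk k)" for k
  proof -
    let ?d = "inverse (real (Suc k))"
    have d0: "?d > 0" by simp
    have D: "(if i = k' then 0 else ?d) + (if k' = j then 0 else ?d) \<ge> (if i = j then 0 else ?d)" for i j k' :: nat
      using d0 by auto
    show ?thesis unfolding fdm_def
    proof (intro conjI allI impI)
      fix i j k' :: nat
      have t1: "r0 i j \<le> r0 i k' + r0 k' j" using dm unfolding dist_matrix_def by blast
      have t2: "(if i = j then 0 else ?d) \<le> (if i = k' then 0 else ?d) + (if k' = j then 0 else ?d)" using d0 by auto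
      show "qk k i k' + qk k k' j \<ge> qk k i j" using t1 t2 unfolding qk_def by linarith
    next
      fix i :: nat show "qk k i i = 0" using dm unfolding dist_matrix_def qk_def by simp
    next
      fix i j :: nat assume "i \<noteq> j"
      then show "qk k i j > 0" using dm d0 unfolding dist_matrix_def qk_def by (simp add: add_nonneg_pos)
    next
      fix i j :: nat show "qk k i j = qk k j i" using dm unfolding dist_matrix_def qk_def by auto
    qed
  qed
  define u where "u k = limR (Suc k) (qk k)" for k
  have uM: "u k \<in> universalM" for k unfolding u_def universalM_def using limR_universal[OF fq] by simp
  have "(\<lambda>k. u k x y) \<longlonglongrightarrow> r0 x y" for x y
  proof -
    have ev: "eventually (\<lambda>k. qk k x y = u k x y) sequentially"
    proof (rule eventually_sequentiallyI[of "max x y"])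
      fix k assume "max x y \<le> k"
      then show "qk k x y = u k x y" unfolding u_def using limR_agree[of x "Suc k" y "qk k"] by simp
    qed
    have "(\<lambda>k. qk k x y) \<longlonglongrightarrow> r0 x y"
    proof (cases "x = y")
      case True then show ?thesis unfolding qk_def by simp
    next
      case False
      have "(\<lambda>k. r0 x y + inverse (real (Suc k))) \<longlonglongrightarrow> r0 x y + 0"
        by (intro tendsto_add tendsto_const LIMSEQ_inverse_real_of_nat)
      then show ?thesis unfolding qk_def using False by simp
    qed
    then show ?thesis using tendsto_cong[OF ev] by simp
  qed
  then have "u \<longlonglongrightarrow> r0" by (simp add: tf)
  then show ?thesis unfolding closure_sequential using uM by blast
qed

lemma open_Ub:
  "open {r::nat\<Rightarrow>nat\<Rightarrow>real. \<not> admissible n r b \<or> (\<exists>m. \<forall>i<n. \<bar>r i m - b i\<bar> < e)}"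
proof -
  have C: "closed {r::nat\<Rightarrow>nat\<Rightarrow>real. admissible n r b}"
  proof -
    have "{r::nat\<Rightarrow>nat\<Rightarrow>real. admissible n r b} =
      (\<Inter>i\<in>{..<n}. \<Inter>j\<in>{..<n}. {r. \<bar>b i - b j\<bar> \<le> r i j} \<inter> {r. r i j \<le> b i + b j})"
      unfolding admissible_def by auto
    moreover have "closed {r::nat\<Rightarrow>nat\<Rightarrow>real. \<bar>b i - b j\<bar> \<le> r i j}" for i j
      by (intro closed_Collect_le continuous_on_const coord_cont)
    moreover have "closed {r::nat\<Rightarrow>nat\<Rightarrow>real. r i j \<le> b i + b j}" for i j
      by (intro closed_Collect_le continuous_on_const coord_cont)
    ultimately show ?thesis by (simp only:) (intro closed_INT ballI closed_Int, auto)
  qed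
  have O: "open {r::nat\<Rightarrow>nat\<Rightarrow>real. \<bar>r i m - b i\<bar> < e}" for i m
    by (intro open_Collect_less continuous_on_const continuous_intros coord_cont)
  have "{r::nat\<Rightarrow>nat\<Rightarrow>real. \<not> admissible n r b \<or> (\<exists>m. \<forall>i<n. \<bar>r i m - b i\<bar> < e)} =
     - {r. admissible n r b} \<union> (\<Union>m. \<Inter>i\<in>{..<n}. {r. \<bar>r i m - b i\<bar> < e})" by auto
  moreover have "open (- {r::nat\<Rightarrow>nat\<Rightarrow>real. admissible n r b})" using C by (simp add: open_Compl)
  moreover have "open (\<Union>m. \<Inter>i\<in>{..<n}. {r::nat\<Rightarrow>nat\<Rightarrow>real. \<bar>r i m - b i\<bar> < e})"
    using O by (intro open_UN ballI open_INT) auto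
  ultimately show ?thesis by auto
qed

lemma open_P: "open {r::nat\<Rightarrow>nat\<Rightarrow>real. i = j \<or> r i j > 0}"
proof (cases "i = j")
  case True then show ?thesis by simp
next
  case False
  have "open {r::nat\<Rightarrow>nat\<Rightarrow>real. 0 < r i j}" by (intro open_Collect_less continuous_on_const coord_cont)
  then show ?thesis using False by simp
qed

theorem theorem1:
  shows "universalM \<noteq> {} \<and> universalM \<subseteq> distR \<and>
         distR \<subseteq> closure universalM \<and>
         gdelta_in (top_of_set distR) universalM"
proof (intro conjI)
  have "fdm 1 (\<lambda>x y. 0)" unfolding fdm_def by simp
  then have "universal (limR 1 (\<lambda>x y. 0))" using limR_universal by simp
  then show "universalM \<noteq> {}" unfolding universalM_def by blast
next
  show sub: "universalM \<subseteq> distR" unfolding universalM_def distR_def universal_def proper_dm_def by auto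
next
  show "distR \<subseteq> closure universalM" using dense_part by blast
next
  define Ub where "Ub p = {r::nat\<Rightarrow>nat\<Rightarrow>real. \<not> admissible (length (fst p)) r (vec (fst p)) \<or>
      (\<exists>m. \<forall>i<length (fst p). \<bar>r i m - vec (fst p) i\<bar> < inverse (real (Suc (snd p))))}" for p :: "rat list \<times> nat"
  define P where "P p = {r::nat\<Rightarrow>nat\<Rightarrow>real. fst p = snd p \<or> r (fst p) (snd p) > 0}" for p :: "nat \<times> nat"
  define T where "T = range (\<lambda>p. distR \<inter> Ub p) \<union> range (\<lambda>p. distR \<inter> P p)"
  have eq: "universalM = \<Inter>T"
  proof (intro equalityI subsetI)
    fix r assume "r \<in> universalM"
    then have u: "universal r" unfolding universalM_def by simp
    then have pr: "proper_dm r" unfolding universal_def by simp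
    then have "r \<in> distR" unfolding distR_def proper_dm_def by simp
    moreover have "r \<in> Ub p" for p
    proof -
      have "inverse (real (Suc (snd p))) > 0" by simp
      then show ?thesis using u unfolding universal_def Ub_def by blast
    qed
    moreover have "r \<in> P p" for p using pr unfolding P_def proper_dm_def by auto
    ultimately show "r \<in> \<Inter>T" unfolding T_def by auto
  next
    fix r assume "r \<in> \<Inter>T"
    then have d: "r \<in> distR" and U: "\<And>p. r \<in> Ub p" and PP: "\<And>p. r \<in> P p" unfolding T_def by auto
    have pr: "proper_dm r" unfolding proper_dm_def
    proof (intro conjI allI impI)
      show "dist_matrix r" using d unfolding distR_def by simp
    next
      fix i j :: nat assume "i \<noteq> j" then show "r i j > 0" using PP[of "(i,j)"] unfolding P_def by simp
    qed
    have "universal r"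
    proof (rule univ_from_rat[OF pr])
      fix bs k assume "admissible (length bs) r (vec bs)"
      then show "\<exists>m. \<forall>i<length bs. \<bar>r i m - vec bs i\<bar> < inverse (real (Suc k))"
        using U[of "(bs,k)"] unfolding Ub_def by auto
    qed
    then show "r \<in> universalM" unfolding universalM_def by simp
  qed
  have "gdelta_in (top_of_set distR) (\<Inter>T)"
  proof (rule gdelta_in_Inter)
    show "countable T" unfolding T_def by (intro countable_Un countable_image countableI_type)
    show "T \<noteq> {}" unfolding T_def by auto
  next
    fix S assume "S \<in> T"
    moreover have "open (Ub p)" for p unfolding Ub_def by (rule open_Ub)
    moreover have "open (P p)" for p unfolding P_def by (rule open_P)
    ultimately show "gdelta_in (top_of_set distR) S" unfolding T_def
      by (auto intro!: open_imp_gdelta_in openin_open_Int)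
  qed
  then show "gdelta_in (top_of_set distR) universalM" using eq by simp
qed

end
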